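(* Define $A_{2}=\frac{1}{\sqrt2}\begin{bmatrix}1&1\\1&-1\end{bmatrix}$ and, for $k\ge1$, $A_{2^{k+1}}=\frac{1}{\sqrt{\beta(A_{2^k})^2+1}}\begin{bmatrix}\beta(A_{2^k})A_{2^k} & I_{2^k}\\ \beta(A_{2^k})A_{2^k} & -I_{2^k}\end{bmatrix}$. Then for every $k\ge1$, $A_{2^k}$ is a $2^k\times 2^k$ matrix with rows of Euclidean norm $1$ and $$\beta(A_{2^k})=\sqrt{k+1}=\sqrt{\log_2(n)+1},\quad n=2^k.$$
   Context: For $A\in\mathbb{R}^{m\times n}$, $\beta(A)=\frac{1}{2^n}\sum_{x\in\{-1,1\}^n}\|Ax\|_\infty$. $I_N$ is the $N\times N$ identity matrix. *)

theory Defs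
  imports "HOL-Analysis.Analysis" "Jordan_Normal_Form.Matrix"
begin

definition sign_vecs :: "nat \<Rightarrow> real vec set" where
  "sign_vecs n = {x. x \<in> carrier_vec n \<and> (\<forall>i<n. x $ i = 1 \<or> x $ i = -1)}"

definition inf_norm_vec :: "real vec \<Rightarrow> real" where
  "inf_norm_vec v = Max {\<bar>v $ i\<bar> | i. i < dim_vec v}"

definition beta :: "real mat \<Rightarrow> real" where
  "beta A = (1 / 2 ^ dim_col A) * (\<Sum>x\<in>sign_vecs (dim_col A). inf_norm_vec (A *\<^sub>v x))"

definition A2 :: "real mat" where
  "A2 = (1 / sqrt 2) \<cdot>\<^sub>m mat 2 2 (\<lambda>(i, j). if i = 1 \<and> j = 1 then -1 else 1)"

text \<open>Amat k is the matrix A_{2^k} (for k >= 1); Amat 0 is an unused dummy.\<close>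
fun Amat :: "nat \<Rightarrow> real mat" where
  "Amat 0 = A2"
| "Amat (Suc 0) = A2"
| "Amat (Suc (Suc k)) =
     (let B = Amat (Suc k); b = beta B; N = 2 ^ Suc k in
      (1 / sqrt (b\<^sup>2 + 1)) \<cdot>\<^sub>m
        four_block_mat (b \<cdot>\<^sub>m B) (1\<^sub>m N) (b \<cdot>\<^sub>m B) (- 1\<^sub>m N))"

end

theory Submission
  imports Defs
begin

lemma sign_vecs_image:
  "sign_vecs n = (\<lambda>f. vec n f) ` (PiE {..<n} (\<lambda>_. {-1, 1::real}))"
proof
  show "sign_vecs n \<subseteq> (\<lambda>f. vec n f) ` (PiE {..<n} (\<lambda>_. {-1, 1::real}))"
  proof
    fix x assume x: "x \<in> sign_vecs n"
    hence xc: "x \<in> carrier_vec n" and xs: "\<forall>i<n. x $ i = 1 \<or> x $ i = -1"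
      by (auto simp: sign_vecs_def)
    let ?f = "\<lambda>i. if i < n then x $ i else undefined"
    have "x = vec n ?f" using xc by (intro eq_vecI) auto
    moreover have "?f \<in> PiE {..<n} (\<lambda>_. {-1, 1::real})" using xs
      by (auto simp: PiE_iff extensional_def split: if_splits)
    ultimately show "x \<in> (\<lambda>f. vec n f) ` (PiE {..<n} (\<lambda>_. {-1, 1::real}))" by blast
  qed
next
  show "(\<lambda>f. vec n f) ` (PiE {..<n} (\<lambda>_. {-1, 1::real})) \<subseteq> sign_vecs n"
    by (auto simp: sign_vecs_def PiE_def Pi_def)
qed

lemma sign_vecs_inj: "inj_on (\<lambda>f. vec n f) (PiE {..<n} (\<lambda>_. {-1, 1::real}))"
proof (rule inj_onI)
  fix f g assume f: "f \<in> PiE {..<n} (\<lambda>_. {-1, 1::real})" and g: "g \<in> PiE {..<n} (\<lambda>_. {-1, 1::real})"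
    and e: "vec n f = vec n g"
  show "f = g"
  proof
    fix i show "f i = g i"
    proof (cases "i < n")
      case True
      then show ?thesis using arg_cong[OF e, of "\<lambda>v. v $ i"] by simp
    next
      case False
      then show ?thesis using f g by (auto simp: PiE_def extensional_def)
    qed
  qed
qed

lemma card_sign_vecs: "card (sign_vecs n) = 2 ^ n"
  unfolding sign_vecs_image
  by (subst card_image[OF sign_vecs_inj]) (simp add: card_PiE numeral_2_eq_2)

lemma finite_sign_vecs: "finite (sign_vecs n)"
  using card_sign_vecs[of n] card_gt_0_iff by fastforce

lemma abs_key:
  fixes b x s :: real
  assumes "x * s \<ge> 0" "s = 1 \<or> s = -1" "b \<ge> 0"
  shows "\<bar>b * x + s\<bar> = b * \<bar>x\<bar> + 1"
  using assms(2)
proof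
  assume s: "s = 1"
  hence "x \<ge> 0" using assms(1) by simp
  hence "b * x \<ge> 0" using assms(3) by simp
  thus ?thesis using s \<open>x \<ge> 0\<close> by simp
next
  assume s: "s = -1"
  hence "x \<le> 0" using assms(1) by simp
  hence "b * x \<le> 0" using assms(3) by (simp add: mult_nonneg_nonpos)
  thus ?thesis using s \<open>x \<le> 0\<close> by simp
qed

lemma max_lemma:
  fixes w z :: "nat \<Rightarrow> real" and b c :: real
  assumes N: "N > 0" and z: "\<forall>i<N. z i = 1 \<or> z i = -1" and b: "b \<ge> 0" and c: "c \<ge> 0"
  shows "Max {\<bar>(if i < N then c*(b*w i + z i) else c*(b*w (i-N) - z (i-N)))\<bar> | i. i < N + N}
    = c * (b * Max {\<bar>w i\<bar> | i. i < N} + 1)"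
proof -
  define m where "m = Max {\<bar>w i\<bar> | i. i < N}"
  have fin: "finite {\<bar>w i\<bar> | i. i < N}" by simp
  have ne: "{\<bar>w i\<bar> | i. i < N} \<noteq> {}" using N by auto
  obtain j where j: "j < N" "\<bar>w j\<bar> = m"
    using Max_in[OF fin ne] unfolding m_def by auto
  have le: "\<bar>w i\<bar> \<le> m" if "i < N" for i
    unfolding m_def by (rule Max_ge[OF fin]) (use that in auto)
  let ?u = "\<lambda>i. \<bar>(if i < N then c*(b*w i + z i) else c*(b*w (i-N) - z (i-N)))\<bar>"
  have bound: "\<bar>b * x + s\<bar> \<le> b * m + 1" if "\<bar>x\<bar> \<le> m" "s = 1 \<or> s = -1" for x s
  proof -
    have "\<bar>b * x\<bar> \<le> b * m" using that b by (simp add: abs_mult mult_left_mono)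
    thus ?thesis using that by auto
  qed
  show ?thesis
    unfolding m_def[symmetric]
  proof (rule Max_eqI)
    show "finite {?u i | i. i < N + N}" by simp
  next
    fix y assume "y \<in> {?u i | i. i < N + N}"
    then obtain i where i: "i < N + N" "y = ?u i" by auto
    show "y \<le> c * (b * m + 1)"
    proof (cases "i < N")
      case True
      have "\<bar>b * w i + z i\<bar> \<le> b * m + 1" using bound le True z by blast
      then show ?thesis using i True c by (simp add: abs_mult mult_left_mono)
    next
      case False
      hence "i - N < N" using i by auto
      hence "\<bar>b * w (i-N) + (- z (i-N))\<bar> \<le> b * m + 1" using bound le z by (metis minus_minus)
      then show ?thesis using i False c by (simp add: abs_mult mult_left_mono)
    qed
  next
    show "c * (b * m + 1) \<in> {?u i | i. i < N + N}"
    proof (cases "w j * z j \<ge> 0")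
      case True
      have "\<bar>b * w j + z j\<bar> = b * m + 1"
        using abs_key[OF True _ b] z j by auto
      hence "?u j = c * (b * m + 1)" using j c by (simp add: abs_mult)
      thus ?thesis using j by (auto intro!: exI[of _ j])
    next
      case False
      have "w j * (- z j) \<ge> 0" using False by simp
      hence "\<bar>b * w j + (- z j)\<bar> = b * m + 1"
        using abs_key[OF _ _ b, of "w j" "- z j"] z j by auto
      hence "\<bar>b * w j - z j\<bar> = b * m + 1" by simp
      hence "?u (j + N) = c * (b * m + 1)" using j c by (simp add: abs_mult)
      thus ?thesis using j by (auto intro!: exI[of _ "j + N"])
    qed
  qed
qed


lemma entries:
  fixes B :: "real mat" and b c :: real
  assumes B: "B \<in> carrier_mat N N" and y: "y \<in> carrier_vec N" and z: "z \<in> carrier_vec N"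
    and i: "i < N + N"
  shows "((c \<cdot>\<^sub>m four_block_mat (b \<cdot>\<^sub>m B) (1\<^sub>m N) (b \<cdot>\<^sub>m B) (- 1\<^sub>m N)) *\<^sub>v (y @\<^sub>v z)) $ i
     = (if i < N then c*(b*(B *\<^sub>v y) $ i + z $ i) else c*(b*(B *\<^sub>v y) $ (i-N) - z $ (i-N)))"
proof -
  have c1: "b \<cdot>\<^sub>m B \<in> carrier_mat N N" "1\<^sub>m N \<in> carrier_mat N N" "- 1\<^sub>m N \<in> carrier_mat N N"
    using B by auto
  let ?F = "four_block_mat (b \<cdot>\<^sub>m B) (1\<^sub>m N) (b \<cdot>\<^sub>m B) (- 1\<^sub>m N)"
  have dF: "dim_row ?F = N + N" using B by simp
  have "((c \<cdot>\<^sub>m ?F) *\<^sub>v (y @\<^sub>v z)) $ i = row (c \<cdot>\<^sub>m ?F) i \<bullet> (y @\<^sub>v z)"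
    using i dF by simp
  also have "\<dots> = c * (row ?F i \<bullet> (y @\<^sub>v z))"
    using i dF y z B by simp
  finally have e: "((c \<cdot>\<^sub>m ?F) *\<^sub>v (y @\<^sub>v z)) $ i = c * (row ?F i \<bullet> (y @\<^sub>v z))" .
  show ?thesis
  proof (cases "i < N")
    case True
    have "row ?F i = row (b \<cdot>\<^sub>m B) i @\<^sub>v row (1\<^sub>m N) i"
      using row_four_block_mat(1)[OF c1(1,2,1,3) True] .
    also have "\<dots> = (b \<cdot>\<^sub>v row B i) @\<^sub>v unit_vec N i" using True B by simp
    finally have r: "row ?F i = (b \<cdot>\<^sub>v row B i) @\<^sub>v unit_vec N i" .
    have "row ?F i \<bullet> (y @\<^sub>v z) = (b \<cdot>\<^sub>v row B i) \<bullet> y + unit_vec N i \<bullet> z"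
      unfolding r by (rule scalar_prod_append) (use B y z True in auto)
    also have "\<dots> = b * (B *\<^sub>v y) $ i + z $ i" using B y z True by simp
    finally show ?thesis using e True by simp
  next
    case False
    have j: "i - N < N" using i False by auto
    have "row ?F i = row (b \<cdot>\<^sub>m B) (i-N) @\<^sub>v row (- 1\<^sub>m N) (i-N)"
      using row_four_block_mat(2)[OF c1(1,2,1,3) False i] .
    also have "\<dots> = (b \<cdot>\<^sub>v row B (i-N)) @\<^sub>v (- unit_vec N (i-N))" using j B by simp
    finally have r: "row ?F i = (b \<cdot>\<^sub>v row B (i-N)) @\<^sub>v (- unit_vec N (i-N))" .
    have "row ?F i \<bullet> (y @\<^sub>v z) = (b \<cdot>\<^sub>v row B (i-N)) \<bullet> y + (- unit_vec N (i-N)) \<bullet> z"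
      unfolding r by (rule scalar_prod_append) (use B y z j in auto)
    also have "\<dots> = b * (B *\<^sub>v y) $ (i-N) - z $ (i-N)" using B y z j by simp
    finally show ?thesis using e False by simp
  qed
qed


lemma inf_norm_step:
  fixes B :: "real mat" and b c :: real
  assumes B: "B \<in> carrier_mat N N" and N: "N > 0" and y: "y \<in> carrier_vec N" and z: "z \<in> sign_vecs N"
    and b: "b \<ge> 0" and c: "c \<ge> 0"
  shows "inf_norm_vec ((c \<cdot>\<^sub>m four_block_mat (b \<cdot>\<^sub>m B) (1\<^sub>m N) (b \<cdot>\<^sub>m B) (- 1\<^sub>m N)) *\<^sub>v (y @\<^sub>v z))
     = c * (b * inf_norm_vec (B *\<^sub>v y) + 1)"
proof -
  let ?M = "c \<cdot>\<^sub>m four_block_mat (b \<cdot>\<^sub>m B) (1\<^sub>m N) (b \<cdot>\<^sub>m B) (- 1\<^sub>m N)"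
  have zc: "z \<in> carrier_vec N" and zs: "\<forall>i<N. z $ i = 1 \<or> z $ i = -1"
    using z by (auto simp: sign_vecs_def)
  have d: "dim_vec (?M *\<^sub>v (y @\<^sub>v z)) = N + N" using B by simp
  define u where "u = (\<lambda>i. \<bar>(if i < N then c*(b*(B *\<^sub>v y) $ i + z $ i) else c*(b*(B *\<^sub>v y) $ (i-N) - z $ (i-N)))\<bar>)"
  have eqi: "\<And>i. i < N + N \<Longrightarrow> \<bar>(?M *\<^sub>v (y @\<^sub>v z)) $ i\<bar> = u i"
    unfolding u_def using entries[OF B y zc] by presburger
  have seq: "{\<bar>(?M *\<^sub>v (y @\<^sub>v z)) $ i\<bar> | i. i < N + N} = {u i | i. i < N + N}"
    using eqi by (auto simp: eqi) (metis eqi)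
  have "Max {u i | i. i < N + N} = c * (b * Max {\<bar>(B *\<^sub>v y) $ i\<bar> | i. i < N} + 1)"
    unfolding u_def by (rule max_lemma[OF N _ b c]) (use zs in auto)
  hence "inf_norm_vec (?M *\<^sub>v (y @\<^sub>v z)) = c * (b * Max {\<bar>(B *\<^sub>v y) $ i\<bar> | i. i < N} + 1)"
    unfolding inf_norm_vec_def d seq .
  also have "Max {\<bar>(B *\<^sub>v y) $ i\<bar> | i. i < N} = inf_norm_vec (B *\<^sub>v y)"
    unfolding inf_norm_vec_def using B by simp
  finally show ?thesis .
qed


lemma sign_vecs_split:
  "sign_vecs (N + N) = (\<lambda>(y, z). y @\<^sub>v z) ` (sign_vecs N \<times> sign_vecs N)"
proof
  show "sign_vecs (N + N) \<subseteq> (\<lambda>(y, z). y @\<^sub>v z) ` (sign_vecs N \<times> sign_vecs N)"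
  proof
    fix x assume x: "x \<in> sign_vecs (N + N)"
    hence xc: "x \<in> carrier_vec (N + N)" and xs: "\<forall>i<N+N. x $ i = 1 \<or> x $ i = -1"
      by (auto simp: sign_vecs_def)
    have "vec_first x N \<in> sign_vecs N" using xs by (auto simp: sign_vecs_def vec_first_def)
    moreover have "vec_last x N \<in> sign_vecs N" using xs xc by (auto simp: sign_vecs_def vec_last_def)
    moreover have "x = vec_first x N @\<^sub>v vec_last x N" using xc by simp
    ultimately show "x \<in> (\<lambda>(y, z). y @\<^sub>v z) ` (sign_vecs N \<times> sign_vecs N)"
      by (intro image_eqI[where x="(vec_first x N, vec_last x N)"]) auto
  qed
next
  show "(\<lambda>(y, z). y @\<^sub>v z) ` (sign_vecs N \<times> sign_vecs N) \<subseteq> sign_vecs (N + N)"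
  proof (clarify)
    fix y z assume y: "y \<in> sign_vecs N" and z: "z \<in> sign_vecs N"
    have yc: "y \<in> carrier_vec N" and ys: "\<forall>i<N. y $ i = 1 \<or> y $ i = -1"
      and zc: "z \<in> carrier_vec N" and zs: "\<forall>i<N. z $ i = 1 \<or> z $ i = -1"
      using y z by (auto simp: sign_vecs_def)
    have "\<forall>i<N+N. (y @\<^sub>v z) $ i = 1 \<or> (y @\<^sub>v z) $ i = -1"
    proof (intro allI impI)
      fix i assume i: "i < N + N"
      show "(y @\<^sub>v z) $ i = 1 \<or> (y @\<^sub>v z) $ i = -1"
      proof (cases "i < N")
        case True thus ?thesis using ys yc zc i by simp
      next
        case False
        hence "i - N < N" using i by arith
        thus ?thesis using zs yc zc i False by simp
      qed
    qed
    thus "y @\<^sub>v z \<in> sign_vecs (N + N)"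
      using yc zc by (simp add: sign_vecs_def)
  qed
qed

lemma sign_vecs_split_inj: "inj_on (\<lambda>(y, z). y @\<^sub>v z) (sign_vecs N \<times> sign_vecs N)"
  by (rule inj_onI) (auto simp: sign_vecs_def)


lemma beta_step:
  fixes B :: "real mat" and b c :: real
  assumes B: "B \<in> carrier_mat N N" and N: "N > 0" and b: "b \<ge> 0" and c: "c \<ge> 0"
  shows "beta (c \<cdot>\<^sub>m four_block_mat (b \<cdot>\<^sub>m B) (1\<^sub>m N) (b \<cdot>\<^sub>m B) (- 1\<^sub>m N)) = c * (b * beta B + 1)"
proof -
  let ?M = "c \<cdot>\<^sub>m four_block_mat (b \<cdot>\<^sub>m B) (1\<^sub>m N) (b \<cdot>\<^sub>m B) (- 1\<^sub>m N)"
  let ?I = "\<lambda>y. inf_norm_vec (B *\<^sub>v y)"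
  let ?S = "sign_vecs N"
  have dM: "dim_col ?M = N + N" using B by simp
  have dB: "dim_col B = N" using B by simp
  have "(\<Sum>x\<in>sign_vecs (N + N). inf_norm_vec (?M *\<^sub>v x))
      = (\<Sum>p\<in>?S \<times> ?S. inf_norm_vec (?M *\<^sub>v (fst p @\<^sub>v snd p)))"
    unfolding sign_vecs_split by (subst sum.reindex[OF sign_vecs_split_inj]) (simp add: case_prod_beta)
  also have "\<dots> = (\<Sum>p\<in>?S \<times> ?S. c * (b * ?I (fst p) + 1))"
  proof (rule sum.cong)
    fix p assume p: "p \<in> ?S \<times> ?S"
    hence "fst p \<in> carrier_vec N" "snd p \<in> ?S" by (auto simp: sign_vecs_def)
    thus "inf_norm_vec (?M *\<^sub>v (fst p @\<^sub>v snd p)) = c * (b * ?I (fst p) + 1)"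
      by (rule inf_norm_step[OF B N _ _ b c])
  qed simp
  also have "\<dots> = (\<Sum>y\<in>?S. \<Sum>z\<in>?S. c * (b * ?I y + 1))"
    by (subst sum.cartesian_product) (simp add: case_prod_beta)
  also have "\<dots> = (\<Sum>y\<in>?S. 2 ^ N * (c * (b * ?I y + 1)))"
    by (simp add: card_sign_vecs)
  also have "\<dots> = 2 ^ N * (c * b * (\<Sum>y\<in>?S. ?I y) + c * 2 ^ N)"
    by (simp add: sum.distrib sum_distrib_left card_sign_vecs algebra_simps)
  finally have e: "(\<Sum>x\<in>sign_vecs (N + N). inf_norm_vec (?M *\<^sub>v x)) = 2 ^ N * (c * b * (\<Sum>y\<in>?S. ?I y) + c * 2 ^ N)" .
  show ?thesis
    unfolding beta_def dM dB e by (simp add: power_add field_simps)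
qed


lemma row_step:
  fixes B :: "real mat" and b c :: real
  assumes B: "B \<in> carrier_mat N N" and rows: "\<forall>j<N. row B j \<bullet> row B j = 1" and i: "i < N + N"
  shows "row (c \<cdot>\<^sub>m four_block_mat (b \<cdot>\<^sub>m B) (1\<^sub>m N) (b \<cdot>\<^sub>m B) (- 1\<^sub>m N)) i
       \<bullet> row (c \<cdot>\<^sub>m four_block_mat (b \<cdot>\<^sub>m B) (1\<^sub>m N) (b \<cdot>\<^sub>m B) (- 1\<^sub>m N)) i = c^2 * (b^2 + 1)"
proof -
  have c1: "b \<cdot>\<^sub>m B \<in> carrier_mat N N" "1\<^sub>m N \<in> carrier_mat N N" "- 1\<^sub>m N \<in> carrier_mat N N"
    using B by auto
  let ?F = "four_block_mat (b \<cdot>\<^sub>m B) (1\<^sub>m N) (b \<cdot>\<^sub>m B) (- 1\<^sub>m N)"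
  have dF: "dim_row ?F = N + N" "dim_col ?F = N + N" using B by auto
  have rF: "row (c \<cdot>\<^sub>m ?F) i = c \<cdot>\<^sub>v row ?F i" using i dF by simp
  have dr: "dim_vec (row ?F i) = N + N" using dF by simp
  have "row ?F i \<bullet> row ?F i = b^2 + 1"
  proof (cases "i < N")
    case True
    have "row ?F i = row (b \<cdot>\<^sub>m B) i @\<^sub>v row (1\<^sub>m N) i"
      using row_four_block_mat(1)[OF c1(1,2,1,3) True] .
    also have "\<dots> = (b \<cdot>\<^sub>v row B i) @\<^sub>v unit_vec N i" using True B by simp
    finally have r: "row ?F i = (b \<cdot>\<^sub>v row B i) @\<^sub>v unit_vec N i" .
    have "row ?F i \<bullet> row ?F i = (b \<cdot>\<^sub>v row B i) \<bullet> (b \<cdot>\<^sub>v row B i) + unit_vec N i \<bullet> unit_vec N i"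
      unfolding r by (rule scalar_prod_append[of _ N _ N]) (use B True in auto)
    also have "\<dots> = b^2 + 1" using B True rows by (simp add: power2_eq_square)
    finally show ?thesis .
  next
    case False
    have j: "i - N < N" using i False by auto
    have "row ?F i = row (b \<cdot>\<^sub>m B) (i-N) @\<^sub>v row (- 1\<^sub>m N) (i-N)"
      using row_four_block_mat(2)[OF c1(1,2,1,3) False i] .
    also have "\<dots> = (b \<cdot>\<^sub>v row B (i-N)) @\<^sub>v (- unit_vec N (i-N))" using j B by simp
    finally have r: "row ?F i = (b \<cdot>\<^sub>v row B (i-N)) @\<^sub>v (- unit_vec N (i-N))" .
    have "row ?F i \<bullet> row ?F i = (b \<cdot>\<^sub>v row B (i-N)) \<bullet> (b \<cdot>\<^sub>v row B (i-N)) + (- unit_vec N (i-N)) \<bullet> (- unit_vec N (i-N))"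
      unfolding r by (rule scalar_prod_append[of _ N _ N]) (use B j in auto)
    also have "\<dots> = b^2 + 1" using B j rows by (simp add: power2_eq_square)
    finally show ?thesis .
  qed
  thus ?thesis unfolding rF using dr by (simp add: power2_eq_square)
qed

lemma A2_carrier: "A2 \<in> carrier_mat 2 2"
  by (simp add: A2_def)

lemma A2_rows: "\<forall>i<2. row A2 i \<bullet> row A2 i = 1"
proof (intro allI impI)
  fix i :: nat assume "i < 2"
  hence "i = 0 \<or> i = 1" by auto
  thus "row A2 i \<bullet> row A2 i = 1"
    by (auto simp: A2_def scalar_prod_def numeral_2_eq_2 row_def)
qed

lemma A2_inf: assumes x: "x \<in> sign_vecs 2" shows "inf_norm_vec (A2 *\<^sub>v x) = sqrt 2"
proof -
  have xc: "x \<in> carrier_vec 2" and x0: "x $ 0 = 1 \<or> x $ 0 = -1" and x1: "x $ 1 = 1 \<or> x $ 1 = -1"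
    using x by (auto simp: sign_vecs_def)
  let ?v = "A2 *\<^sub>v x"
  have v0: "?v $ 0 = (x $ 0 + x $ 1) / sqrt 2" using xc
    by (simp add: A2_def scalar_prod_def numeral_2_eq_2 row_def field_simps)
  have v1: "?v $ 1 = (x $ 0 - x $ 1) / sqrt 2" using xc
    by (simp add: A2_def scalar_prod_def numeral_2_eq_2 row_def field_simps)
  have d: "dim_vec ?v = 2" by (simp add: A2_def)
  have s: "{\<bar>?v $ i\<bar> | i. i < dim_vec ?v} = {\<bar>?v $ 0\<bar>, \<bar>?v $ 1\<bar>}"
    unfolding d using less_2_cases by fastforce
  have "sqrt 2 * sqrt 2 = 2" by simp
  hence "2 / sqrt 2 = sqrt 2" by (metis nonzero_mult_div_cancel_left real_sqrt_eq_zero_cancel_iff zero_neq_numeral)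
  thus ?thesis unfolding inf_norm_vec_def s v0 v1 using x0 x1 by auto
qed

lemma A2_beta: "beta A2 = sqrt 2"
proof -
  have "dim_col A2 = 2" by (simp add: A2_def)
  moreover have "(\<Sum>x\<in>sign_vecs 2. inf_norm_vec (A2 *\<^sub>v x)) = 4 * sqrt 2"
    using A2_inf card_sign_vecs[of 2] by simp
  ultimately show ?thesis unfolding beta_def by simp
qed


lemma main_ind:
  "Amat (Suc n) \<in> carrier_mat (2 ^ Suc n) (2 ^ Suc n)
    \<and> (\<forall>i < 2 ^ Suc n. row (Amat (Suc n)) i \<bullet> row (Amat (Suc n)) i = 1)
    \<and> beta (Amat (Suc n)) = sqrt (real (Suc n) + 1)"
proof (induction n)
  case 0
  show ?case using A2_carrier A2_rows A2_beta by simp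
next
  case (Suc n)
  define B where "B = Amat (Suc n)"
  define N :: nat where "N = 2 ^ Suc n"
  define b where "b = beta B"
  define c where "c = 1 / sqrt (b\<^sup>2 + 1)"
  have BC: "B \<in> carrier_mat N N" and rows: "\<forall>j<N. row B j \<bullet> row B j = 1"
    and bB: "b = sqrt (real (Suc n) + 1)"
    using Suc.IH unfolding B_def N_def b_def by auto
  have N: "N > 0" unfolding N_def by simp
  have b0: "b \<ge> 0" unfolding bB by simp
  have b2: "b\<^sup>2 = real (Suc n) + 1" unfolding bB by simp
  have c0: "c \<ge> 0" unfolding c_def by simp
  have A: "Amat (Suc (Suc n)) = c \<cdot>\<^sub>m four_block_mat (b \<cdot>\<^sub>m B) (1\<^sub>m N) (b \<cdot>\<^sub>m B) (- 1\<^sub>m N)"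
    unfolding B_def N_def b_def c_def by (simp add: Let_def)
  have NN: "2 ^ Suc (Suc n) = N + N" unfolding N_def by simp
  have p: "b\<^sup>2 + 1 > 0" by (simp add: add_nonneg_pos)
  have "c^2 * (b^2 + 1) = 1" unfolding c_def using p by (simp add: power_divide)
  moreover have "c * (b * b + 1) = sqrt (real (Suc (Suc n)) + 1)"
  proof -
    have "c * (b * b + 1) = (b\<^sup>2 + 1) / sqrt (b\<^sup>2 + 1)" unfolding c_def by (simp add: power2_eq_square)
    also have "\<dots> = sqrt (b\<^sup>2 + 1)" using p by (metis real_div_sqrt less_imp_le)
    finally show ?thesis using b2 by simp
  qed
  moreover have "c \<cdot>\<^sub>m four_block_mat (b \<cdot>\<^sub>m B) (1\<^sub>m N) (b \<cdot>\<^sub>m B) (- 1\<^sub>m N) \<in> carrier_mat (N + N) (N + N)"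
    using BC by simp
  ultimately show ?case
    unfolding A NN using row_step[OF BC rows, of _ c b] beta_step[OF BC N b0 c0] b_def[symmetric] by simp
qed

theorem corollary4:
  fixes k :: nat
  assumes "k \<ge> 1"
  shows "Amat k \<in> carrier_mat (2 ^ k) (2 ^ k)
    \<and> (\<forall>i < 2 ^ k. sqrt (row (Amat k) i \<bullet> row (Amat k) i) = 1)
    \<and> beta (Amat k) = sqrt (real k + 1)
    \<and> beta (Amat k) = sqrt (log 2 (real (2 ^ k)) + 1)"
proof -
  obtain n where k: "k = Suc n" using assms by (cases k) auto
  have "log 2 (real (2 ^ k)) = real k" by simp
  thus ?thesis using main_ind[of n] unfolding k[symmetric] by simp
qed

end
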